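(* Let $(\Re,\oplus,\circ)$ be a commutative Krasner hyperring with identity $1\neq 0$, let $N$ be a proper hyperideal of $\Re$, and let $\phi:L(\Re)\to L(\Re)\cup\{\emptyset\}$ be a function with $\phi(N)\subseteq N$. Then the following are equivalent: (i) $N$ is a $\phi$-primary hyperideal of $\Re$; (ii) for every $a\in\Re-\sqrt{N}$, $(N:a)=N\cup(\phi(N):a)$; (iii) for every $a\in\Re-\sqrt{N}$, $(N:a)=N$ or $(N:a)=(\phi(N):a)$; (iv) for all hyperideals $K,L$ of $\Re$ with $K\circ L\subseteq N$ and $K\circ L\not\subseteq\phi(N)$, we have $K\subseteq N$ or $L\subseteq\sqrt{N}$.
   Context: A commutative Krasner hyperring with identity is $(\Re,\oplus,\circ)$ where $(\Re,\oplus)$ is a canonical hypergroup (the hyperoperation $\oplus$ is associative and commutative; there is $0$ with $a\oplus 0=\{a\}$; each $a$ has a unique $-a$ with $0\in a\oplus(-a)$; and $c\in a\oplus b$ implies $b\in c\oplus(-a)$ and $a\in c\oplus(-b)$), $(\Re,\circ)$ is a commutative semigroup with identity $1\neq0$ and $a\circ 0=0$, and $\circ$ distributes over $\oplus$. A hyperideal is a nonempty $N\subseteq\Re$ with $a\oplus(-b)\subseteq N$ and $r\circ a\in N$ for all $a,b\in N$, $r\in\Re$; $L(\Re)$ is the set of hyperideals. For $I\in L(\Re)\cup\{\emptyset\}$ and $a\in\Re$, $(I:a)=\{x\in\Re: x\circ a\in I\}$; $\sqrt{N}=\{x\in\Re: x^n\in N\text{ for some }n\geq1\}$. For hyperideals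 $K,L$, $K\circ L$ is the hyperideal generated by $\{k\circ l\}$. "$x\in N-\phi(N)$" means $x\in N$, $x\notin\phi(N)$. A proper hyperideal $N$ is $\phi$-primary if for all $a,b\in\Re$, $a\circ b\in N-\phi(N)$ implies $a\in N$ or $b^k\in N$ for some $k\in\mathbb{N}$. *)

theory Defs
  imports Main
begin

definition hneg :: "('a \<Rightarrow> 'a \<Rightarrow> 'a set) \<Rightarrow> 'a \<Rightarrow> 'a \<Rightarrow> 'a" where
  "hneg add zero a = (THE b. zero \<in> add a b)"

definition canonical_hypergroup :: "('a \<Rightarrow> 'a \<Rightarrow> 'a set) \<Rightarrow> 'a \<Rightarrow> bool" where
  "canonical_hypergroup add zero \<longleftrightarrow>
     (\<forall>a b. add a b \<noteq> {}) \<and>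
     (\<forall>a b c. (\<Union>x\<in>add a b. add x c) = (\<Union>x\<in>add b c. add a x)) \<and>
     (\<forall>a b. add a b = add b a) \<and>
     (\<forall>a. add a zero = {a}) \<and>
     (\<forall>a. \<exists>!b. zero \<in> add a b) \<and>
     (\<forall>a b c. c \<in> add a b \<longrightarrow>
         b \<in> add c (hneg add zero a) \<and> a \<in> add c (hneg add zero b))"

definition krasner_hyperring ::
  "('a \<Rightarrow> 'a \<Rightarrow> 'a set) \<Rightarrow> ('a \<Rightarrow> 'a \<Rightarrow> 'a) \<Rightarrow> 'a \<Rightarrow> 'a \<Rightarrow> bool" where
  "krasner_hyperring add mult zero one \<longleftrightarrow>
     canonical_hypergroup add zero \<and>
     (\<forall>a b c. mult (mult a b) c = mult a (mult b c)) \<and>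
     (\<forall>a b. mult a b = mult b a) \<and>
     (\<forall>a. mult one a = a) \<and>
     one \<noteq> zero \<and>
     (\<forall>a. mult a zero = zero) \<and>
     (\<forall>a b c. mult a ` add b c = add (mult a b) (mult a c))"

definition hyperideal ::
  "('a \<Rightarrow> 'a \<Rightarrow> 'a set) \<Rightarrow> ('a \<Rightarrow> 'a \<Rightarrow> 'a) \<Rightarrow> 'a \<Rightarrow> 'a set \<Rightarrow> bool" where
  "hyperideal add mult zero N \<longleftrightarrow>
     N \<noteq> {} \<and>
     (\<forall>a\<in>N. \<forall>b\<in>N. add a (hneg add zero b) \<subseteq> N) \<and>
     (\<forall>r. \<forall>a\<in>N. mult r a \<in> N)"

definition hcolon :: "('a \<Rightarrow> 'a \<Rightarrow> 'a) \<Rightarrow> 'a set \<Rightarrow> 'a \<Rightarrow> 'a set" where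
  "hcolon mult I a = {x. mult x a \<in> I}"

definition hpow :: "('a \<Rightarrow> 'a \<Rightarrow> 'a) \<Rightarrow> 'a \<Rightarrow> 'a \<Rightarrow> nat \<Rightarrow> 'a" where
  "hpow mult one x n = ((mult x) ^^ n) one"

definition hradical :: "('a \<Rightarrow> 'a \<Rightarrow> 'a) \<Rightarrow> 'a \<Rightarrow> 'a set \<Rightarrow> 'a set" where
  "hradical mult one N = {x. \<exists>n\<ge>1. hpow mult one x n \<in> N}"

definition hideal_prod ::
  "('a \<Rightarrow> 'a \<Rightarrow> 'a set) \<Rightarrow> ('a \<Rightarrow> 'a \<Rightarrow> 'a) \<Rightarrow> 'a \<Rightarrow> 'a set \<Rightarrow> 'a set \<Rightarrow> 'a set" where
  "hideal_prod add mult zero K L =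
     \<Inter>{I. hyperideal add mult zero I \<and> {mult k l | k l. k \<in> K \<and> l \<in> L} \<subseteq> I}"

definition phi_primary ::
  "('a \<Rightarrow> 'a \<Rightarrow> 'a set) \<Rightarrow> ('a \<Rightarrow> 'a \<Rightarrow> 'a) \<Rightarrow> 'a \<Rightarrow> 'a \<Rightarrow> ('a set \<Rightarrow> 'a set) \<Rightarrow> 'a set \<Rightarrow> bool" where
  "phi_primary add mult zero one phi N \<longleftrightarrow>
     hyperideal add mult zero N \<and> N \<noteq> UNIV \<and>
     (\<forall>a b. mult a b \<in> N \<and> mult a b \<notin> phi N \<longrightarrow>
        a \<in> N \<or> (\<exists>k\<ge>1. hpow mult one b k \<in> N))"

end

theory Submission
  imports Defs
begin

locale kh =
  fixes add :: "'a \<Rightarrow> 'a \<Rightarrow> 'a set" and mult :: "'a \<Rightarrow> 'a \<Rightarrow> 'a" and zero one :: 'a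
  assumes KH: "krasner_hyperring add mult zero one"
begin

abbreviation neg where "neg \<equiv> hneg add zero"
abbreviation ideal where "ideal \<equiv> hyperideal add mult zero"

lemma CH: "canonical_hypergroup add zero"
proof - have "canonical_hypergroup add zero" using KH unfolding krasner_hyperring_def by (elim conjE) assumption
  then show ?thesis by blast qed
lemma comm: "mult a b = mult b a"
proof - have "\<forall>a b. mult a b = mult b a" using KH unfolding krasner_hyperring_def by (elim conjE) assumption
  then show ?thesis by blast qed
lemma assoc: "mult (mult a b) c = mult a (mult b c)"
proof - have "\<forall>a b c. mult (mult a b) c = mult a (mult b c)" using KH unfolding krasner_hyperring_def by (elim conjE) assumption
  then show ?thesis by blast qed
lemma one_l[simp]: "mult one a = a"
proof - have "\<forall>a. mult one a = a" using KH unfolding krasner_hyperring_def by (elim conjE) assumption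
  then show ?thesis by blast qed
lemma one_r[simp]: "mult a one = a" using one_l comm by metis
lemma zero_r[simp]: "mult a zero = zero"
proof - have "\<forall>a. mult a zero = zero" using KH unfolding krasner_hyperring_def by (elim conjE) assumption
  then show ?thesis by blast qed
lemma zero_l[simp]: "mult zero a = zero" using zero_r comm by metis
lemma one_ne: "one \<noteq> zero" using KH unfolding krasner_hyperring_def by (elim conjE) assumption
lemma distrib: "mult a ` add b c = add (mult a b) (mult a c)"
proof - have "\<forall>a b c. mult a ` add b c = add (mult a b) (mult a c)" using KH unfolding krasner_hyperring_def by (elim conjE) assumption
  then show ?thesis by blast qed
lemma add_ne: "add a b \<noteq> {}"
proof - have "\<forall>a b. add a b \<noteq> {}" using CH unfolding canonical_hypergroup_def by (elim conjE) assumption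
 then show ?thesis by blast qed
lemma add_comm: "add a b = add b a"
proof - have "\<forall>a b. add a b = add b a" using CH unfolding canonical_hypergroup_def by (elim conjE) assumption
  then show ?thesis by blast qed
lemma add_zero[simp]: "add a zero = {a}"
proof - have "\<forall>a. add a zero = {a}" using CH unfolding canonical_hypergroup_def by (elim conjE) assumption
  then show ?thesis by blast qed
lemma zero_add[simp]: "add zero a = {a}" using add_zero add_comm by metis
lemma neg_ex1: "\<exists>!b. zero \<in> add a b"
proof - have "\<forall>a. \<exists>!b. zero \<in> add a b" using CH unfolding canonical_hypergroup_def by (elim conjE) assumption
 then show ?thesis by blast qed
lemma neg_in_add: "zero \<in> add a (neg a)"
  unfolding hneg_def using neg_ex1 theI' by metis
lemma neg_unique: "zero \<in> add a b \<Longrightarrow> b = neg a"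
  using neg_ex1 neg_in_add by blast
lemma rev: "c \<in> add a b \<Longrightarrow> b \<in> add c (neg a) \<and> a \<in> add c (neg b)"
  using CH unfolding canonical_hypergroup_def by (elim conjE) (simp only:)
lemma neg_neg[simp]: "neg (neg a) = a"
  using neg_unique[of "neg a" a] neg_in_add[of a] add_comm by metis
lemma mult_neg: "mult a (neg b) = neg (mult a b)"
proof -
  have "zero \<in> mult a ` add b (neg b)" using neg_in_add[of b] by (metis image_eqI zero_r)
  then show ?thesis using distrib neg_unique by metis
qed

lemma id_zero: "ideal I \<Longrightarrow> zero \<in> I"
  unfolding hyperideal_def by (metis all_not_in_conv zero_l)
lemma id_mult: "ideal I \<Longrightarrow> x \<in> I \<Longrightarrow> mult r x \<in> I"
  unfolding hyperideal_def by blast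
lemma id_mult2: "ideal I \<Longrightarrow> x \<in> I \<Longrightarrow> mult x r \<in> I"
  using id_mult comm by metis
lemma id_sub: "ideal I \<Longrightarrow> x \<in> I \<Longrightarrow> y \<in> I \<Longrightarrow> z \<in> add x (neg y) \<Longrightarrow> z \<in> I"
  unfolding hyperideal_def by blast
lemma id_neg: "ideal I \<Longrightarrow> x \<in> I \<Longrightarrow> neg x \<in> I"
  using id_sub[of I zero x "neg x"] id_zero by simp
lemma id_add: "ideal I \<Longrightarrow> x \<in> I \<Longrightarrow> y \<in> I \<Longrightarrow> z \<in> add x y \<Longrightarrow> z \<in> I"
  using id_sub[of I x "neg y" z] id_neg by simp
lemma id_one: "ideal I \<Longrightarrow> one \<in> I \<Longrightarrow> I = UNIV"
  using id_mult[of I one] by (metis UNIV_eq_I one_r)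

lemma colon_ideal: assumes "ideal I" shows "ideal (hcolon mult I a)"
  unfolding hyperideal_def hcolon_def
proof (intro conjI ballI allI subsetI)
  show "{x. mult x a \<in> I} \<noteq> {}" using id_zero[OF assms] by (metis empty_iff mem_Collect_eq zero_l)
next
  fix x y z assume x: "x \<in> {x. mult x a \<in> I}" and y: "y \<in> {x. mult x a \<in> I}" and z: "z \<in> add x (neg y)"
  have "mult a z \<in> mult a ` add x (neg y)" using z by blast
  then have "mult a z \<in> add (mult a x) (neg (mult a y))" using distrib[of a x "neg y"] mult_neg by simp
  then have "mult a z \<in> I" using id_sub[OF assms] x y comm by (metis mem_Collect_eq)
  then show "z \<in> {x. mult x a \<in> I}" using comm by simp
next
  fix r x assume "x \<in> {x. mult x a \<in> I}"
  then have "mult r (mult x a) \<in> I" using id_mult[OF assms] by blast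
  then show "mult r x \<in> {x. mult x a \<in> I}" using assoc[of r x a] by simp
qed

lemma sub_colon: "ideal I \<Longrightarrow> I \<subseteq> hcolon mult I a"
  unfolding hcolon_def using id_mult2 by blast

lemma hpow_0[simp]: "hpow mult one x 0 = one" unfolding hpow_def by simp
lemma hpow_Suc: "hpow mult one x (Suc n) = mult x (hpow mult one x n)" unfolding hpow_def by simp
lemma hpow_Suc2: "hpow mult one x (Suc n) = mult (hpow mult one x n) x" using hpow_Suc comm by metis

lemma rad_aux: "\<forall>I x y z m n. m + n = s \<longrightarrow> ideal I \<longrightarrow> hpow mult one x m \<in> I \<longrightarrow>
   hpow mult one y n \<in> I \<longrightarrow> z \<in> add x (neg y) \<longrightarrow> hpow mult one z (m + n) \<in> I"
proof (induction s rule: less_induct)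
  case (less s)
  show ?case
  proof (intro allI impI)
    fix I x y z m n
    assume s: "m + n = s" and I: "ideal I" and xm: "hpow mult one x m \<in> I"
      and yn: "hpow mult one y n \<in> I" and z: "z \<in> add x (neg y)"
    show "hpow mult one z (m + n) \<in> I"
    proof (cases "m = 0 \<or> n = 0")
      case True
      then show ?thesis using xm yn id_one[OF I] by auto
    next
      case False
      then obtain m' n' where m: "m = Suc m'" and n: "n = Suc n'" using not0_implies_Suc by blast
      define w where "w = hpow mult one z (m' + n)"
      have w2: "w = hpow mult one z (m + n')" using m n w_def by simp
      have Ix: "ideal (hcolon mult I x)" and Iy: "ideal (hcolon mult I y)" using colon_ideal I by auto
      have "hpow mult one x m' \<in> hcolon mult I x" using xm m hpow_Suc2 unfolding hcolon_def by simp
      moreover have "hpow mult one y n \<in> hcolon mult I x" using yn sub_colon I by blast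
      ultimately have "w \<in> hcolon mult I x" using less.IH[of "m' + n", rule_format, where I="hcolon mult I x" and x=x and m=m' and y=y and n=n and z=z] s m Ix z w_def by simp
      then have wx: "mult w x \<in> I" unfolding hcolon_def by simp
      have "hpow mult one y n' \<in> hcolon mult I y" using yn n hpow_Suc2 unfolding hcolon_def by simp
      moreover have "hpow mult one x m \<in> hcolon mult I y" using xm sub_colon I by blast
      ultimately have "w \<in> hcolon mult I y" using less.IH[of "m + n'", rule_format, where I="hcolon mult I y" and x=x and m=m and y=y and n=n' and z=z] s n Iy z w2 by simp
      then have "mult w y \<in> I" unfolding hcolon_def by simp
      then have wy: "mult w (neg y) \<in> I" using mult_neg id_neg I by metis
      have "mult w z \<in> add (mult w x) (mult w (neg y))" using z distrib by blast
      then have "mult w z \<in> I" using id_add[OF I wx wy] by blast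
      moreover have "hpow mult one z (m + n) = mult w z" using m w_def hpow_Suc2 by simp
      ultimately show ?thesis by simp
    qed
  qed
qed

lemma rad_sub: assumes "ideal N" "x \<in> hradical mult one N" "y \<in> hradical mult one N" "z \<in> add x (neg y)"
  shows "z \<in> hradical mult one N"
proof -
  obtain m n where "m \<ge> 1" "n \<ge> 1" "hpow mult one x m \<in> N" "hpow mult one y n \<in> N"
    using assms unfolding hradical_def by blast
  then have "hpow mult one z (m + n) \<in> N" using rad_aux[rule_format, OF refl assms(1)] assms(4) by blast
  moreover have "m + n \<ge> 1" using \<open>m \<ge> 1\<close> by simp
  ultimately show ?thesis unfolding hradical_def by blast
qed

lemma union_ideal: assumes "ideal A" "ideal B" "ideal (A \<union> B)" shows "A \<subseteq> B \<or> B \<subseteq> A"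
proof (rule ccontr)
  assume "\<not> (A \<subseteq> B \<or> B \<subseteq> A)"
  then obtain x y where x: "x \<in> A" "x \<notin> B" and y: "y \<in> B" "y \<notin> A" by blast
  obtain z where z: "z \<in> add x (neg y)" using add_ne by blast
  have zz: "z \<in> A \<union> B" using id_sub[OF assms(3), of x y z] x y z by blast
  have r: "neg y \<in> add z (neg x)" "x \<in> add z y" using rev[OF z] by auto
  from zz show False
  proof
    assume "z \<in> A"
    then have "neg y \<in> A" using id_sub[OF assms(1)] x r by blast
    then show False using id_neg[OF assms(1)] y by fastforce
  next
    assume "z \<in> B"
    then show False using id_add[OF assms(2)] x y r by blast
  qed
qed

lemma principal: "ideal {mult r a | r. True}"
  unfolding hyperideal_def
proof (intro conjI ballI allI subsetI)
  show "{mult r a |r. True} \<noteq> {}" by blast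
next
  fix x y z assume "x \<in> {mult r a |r. True}" "y \<in> {mult r a |r. True}" "z \<in> add x (neg y)"
  then obtain r s where "x = mult a r" "y = mult a s" "z \<in> add (mult a r) (mult a (neg s))"
    using comm mult_neg by auto
  then obtain t where "z = mult a t" using distrib by (metis imageE)
  then show "z \<in> {mult r a |r. True}" using comm by auto
next
  fix r x assume "x \<in> {mult r a |r. True}"
  then obtain s where "x = mult s a" by blast
  then have "mult r x = mult (mult r s) a" using assoc[of r s a] by simp
  then show "mult r x \<in> {mult r a |r. True}" by blast
qed

lemma prod_sub: "k \<in> K \<Longrightarrow> l \<in> L \<Longrightarrow> mult k l \<in> hideal_prod add mult zero K L"
  unfolding hideal_prod_def by blast
lemma prod_le: "ideal J \<Longrightarrow> (\<And>k l. k \<in> K \<Longrightarrow> l \<in> L \<Longrightarrow> mult k l \<in> J) \<Longrightarrow> hideal_prod add mult zero K L \<subseteq> J"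
  unfolding hideal_prod_def by blast




lemma main:
  assumes N: "ideal N" and NU: "N \<noteq> UNIV"
    and phi: "ideal (phi N) \<or> phi N = {}"
    and pN: "phi N \<subseteq> N"
  shows "(phi_primary add mult zero one phi N \<longrightarrow>
           (\<forall>a. a \<notin> hradical mult one N \<longrightarrow> hcolon mult N a = N \<union> hcolon mult (phi N) a))
       \<and> ((\<forall>a. a \<notin> hradical mult one N \<longrightarrow> hcolon mult N a = N \<union> hcolon mult (phi N) a) \<longrightarrow>
           (\<forall>a. a \<notin> hradical mult one N \<longrightarrow>
              hcolon mult N a = N \<or> hcolon mult N a = hcolon mult (phi N) a))
       \<and> ((\<forall>a. a \<notin> hradical mult one N \<longrightarrow>
              hcolon mult N a = N \<or> hcolon mult N a = hcolon mult (phi N) a) \<longrightarrow>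
           (\<forall>K L. ideal K \<longrightarrow> ideal L \<longrightarrow>
              hideal_prod add mult zero K L \<subseteq> N \<longrightarrow> \<not> hideal_prod add mult zero K L \<subseteq> phi N \<longrightarrow>
              K \<subseteq> N \<or> L \<subseteq> hradical mult one N))
       \<and> ((\<forall>K L. ideal K \<longrightarrow> ideal L \<longrightarrow>
              hideal_prod add mult zero K L \<subseteq> N \<longrightarrow> \<not> hideal_prod add mult zero K L \<subseteq> phi N \<longrightarrow>
              K \<subseteq> N \<or> L \<subseteq> hradical mult one N) \<longrightarrow> phi_primary add mult zero one phi N)"
proof (intro conjI impI allI)
  fix a assume P: "phi_primary add mult zero one phi N" and a: "a \<notin> hradical mult one N"
  show "hcolon mult N a = N \<union> hcolon mult (phi N) a"
  proof
    show "hcolon mult N a \<subseteq> N \<union> hcolon mult (phi N) a"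
    proof
      fix x assume "x \<in> hcolon mult N a"
      then have xa: "mult x a \<in> N" unfolding hcolon_def by simp
      have PP: "\<forall>a b. mult a b \<in> N \<and> mult a b \<notin> phi N \<longrightarrow> a \<in> N \<or> (\<exists>k\<ge>1. hpow mult one b k \<in> N)"
        using P unfolding phi_primary_def by (elim conjE) assumption
      have na: "\<not> (\<exists>k\<ge>1. hpow mult one a k \<in> N)" using a unfolding hradical_def by simp
      show "x \<in> N \<union> hcolon mult (phi N) a"
      proof (cases "mult x a \<in> phi N")
        case True then show ?thesis unfolding hcolon_def by simp
      next
        case False then have "x \<in> N \<or> (\<exists>k\<ge>1. hpow mult one a k \<in> N)" using PP xa by blast
        then show ?thesis using na by blast
      qed
    qed
    show "N \<union> hcolon mult (phi N) a \<subseteq> hcolon mult N a" using sub_colon[OF N] pN unfolding hcolon_def by blast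
  qed
next
  fix a assume H: "\<forall>a. a \<notin> hradical mult one N \<longrightarrow> hcolon mult N a = N \<union> hcolon mult (phi N) a"
    and a: "a \<notin> hradical mult one N"
  have e: "hcolon mult N a = N \<union> hcolon mult (phi N) a" using H a by blast
  show "hcolon mult N a = N \<or> hcolon mult N a = hcolon mult (phi N) a"
  proof (cases "phi N = {}")
    case True
    then show ?thesis using e unfolding hcolon_def by auto
  next
    case False
    then have "ideal (phi N)" using phi by blast
    then have "ideal (hcolon mult (phi N) a)" by (rule colon_ideal)
    moreover have "ideal (N \<union> hcolon mult (phi N) a)" using e colon_ideal[OF N] by metis
    ultimately have "N \<subseteq> hcolon mult (phi N) a \<or> hcolon mult (phi N) a \<subseteq> N" using union_ideal N by blast
    then show ?thesis using e by blast
  qed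
next
  fix K L assume H: "\<forall>a. a \<notin> hradical mult one N \<longrightarrow>
              hcolon mult N a = N \<or> hcolon mult N a = hcolon mult (phi N) a"
    and K: "ideal K" and L: "ideal L" and PN: "hideal_prod add mult zero K L \<subseteq> N"
    and Pphi: "\<not> hideal_prod add mult zero K L \<subseteq> phi N"
  show "K \<subseteq> N \<or> L \<subseteq> hradical mult one N"
  proof (rule ccontr)
    assume "\<not> (K \<subseteq> N \<or> L \<subseteq> hradical mult one N)"
    then obtain a c where a: "a \<in> K" "a \<notin> N" and c: "c \<in> L" "c \<notin> hradical mult one N" by blast
    have A: "mult k b \<in> phi N" if k: "k \<in> K" and b: "b \<in> L" "b \<notin> hradical mult one N" for k b
    proof -
      have "K \<subseteq> hcolon mult N b" using prod_sub PN b unfolding hcolon_def by blast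
      then have "hcolon mult N b \<noteq> N" using a by blast
      then have "hcolon mult N b = hcolon mult (phi N) b" using H b by blast
      then show ?thesis using k prod_sub PN b unfolding hcolon_def by blast
    qed
    have phiI: "ideal (phi N)" using phi A[OF a(1) c] by blast
    have B: "mult k l \<in> phi N" if k: "k \<in> K" and l: "l \<in> L" for k l
    proof (cases "l \<in> hradical mult one N")
      case False then show ?thesis using A k l by blast
    next
      case True
      obtain z where z: "z \<in> add l c" using add_ne by blast
      have zL: "z \<in> L" using id_add[OF L l c(1) z] .
      have r: "c \<in> add z (neg l)" "l \<in> add z (neg c)" using rev[OF z] by auto
      have zN: "z \<notin> hradical mult one N" using rad_sub[OF N _ True r(1)] c(2) by blast
      have "mult k l \<in> add (mult k z) (mult k (neg c))" using r(2) distrib by blast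
      then have "mult k l \<in> add (mult k z) (neg (mult k c))" using mult_neg by simp
      then show ?thesis using id_sub[OF phiI A[OF k zL zN] A[OF k c]] by blast
    qed
    have "hideal_prod add mult zero K L \<subseteq> phi N" using prod_le[OF phiI] B by blast
    then show False using Pphi by blast
  qed
next
  assume H: "\<forall>K L. ideal K \<longrightarrow> ideal L \<longrightarrow>
              hideal_prod add mult zero K L \<subseteq> N \<longrightarrow> \<not> hideal_prod add mult zero K L \<subseteq> phi N \<longrightarrow>
              K \<subseteq> N \<or> L \<subseteq> hradical mult one N"
  show "phi_primary add mult zero one phi N"
    unfolding phi_primary_def
  proof (intro conjI allI impI N NU)
    fix a b assume ab: "mult a b \<in> N \<and> mult a b \<notin> phi N"
    let ?K = "{mult r a | r. True}" and ?L = "{mult r b | r. True}"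
    have "hideal_prod add mult zero ?K ?L \<subseteq> {mult r (mult a b) | r. True}"
    proof (rule prod_le[OF principal])
      fix k l assume "k \<in> ?K" "l \<in> ?L"
      then obtain r s where "k = mult r a" "l = mult s b" by blast
      then have "mult k l = mult (mult r s) (mult a b)" using assoc comm by metis
      then show "mult k l \<in> {mult r (mult a b) | r. True}" by blast
    qed
    also have "\<dots> \<subseteq> N" using id_mult[OF N] ab by blast
    finally have 1: "hideal_prod add mult zero ?K ?L \<subseteq> N" .
    have "a \<in> ?K" "b \<in> ?L" using one_l by (metis (mono_tags, lifting) mem_Collect_eq)+
    then have "mult a b \<in> hideal_prod add mult zero ?K ?L" by (rule prod_sub)
    then have 2: "\<not> hideal_prod add mult zero ?K ?L \<subseteq> phi N" using ab by blast
    have "?K \<subseteq> N \<or> ?L \<subseteq> hradical mult one N" using H[rule_format, OF principal principal 1 2] .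
    moreover have "a \<in> ?K" "b \<in> ?L" using one_l by (metis (mono_tags, lifting) mem_Collect_eq)+
    ultimately have "a \<in> N \<or> b \<in> hradical mult one N" by blast
    then show "a \<in> N \<or> (\<exists>k\<ge>1. hpow mult one b k \<in> N)" unfolding hradical_def by blast
  qed
qed

end

theorem mainTheorem2:
  fixes add :: "'a \<Rightarrow> 'a \<Rightarrow> 'a set" and mult :: "'a \<Rightarrow> 'a \<Rightarrow> 'a"
    and zero one :: 'a and phi :: "'a set \<Rightarrow> 'a set" and N :: "'a set"
  assumes "krasner_hyperring add mult zero one"
    and "hyperideal add mult zero N" and "N \<noteq> UNIV"
    and "\<forall>I. hyperideal add mult zero I \<longrightarrow> hyperideal add mult zero (phi I) \<or> phi I = {}"
    and "phi N \<subseteq> N"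
  shows "(phi_primary add mult zero one phi N \<longleftrightarrow>
           (\<forall>a. a \<notin> hradical mult one N \<longrightarrow> hcolon mult N a = N \<union> hcolon mult (phi N) a))
       \<and> ((\<forall>a. a \<notin> hradical mult one N \<longrightarrow> hcolon mult N a = N \<union> hcolon mult (phi N) a) \<longleftrightarrow>
           (\<forall>a. a \<notin> hradical mult one N \<longrightarrow>
              hcolon mult N a = N \<or> hcolon mult N a = hcolon mult (phi N) a))
       \<and> ((\<forall>a. a \<notin> hradical mult one N \<longrightarrow>
              hcolon mult N a = N \<or> hcolon mult N a = hcolon mult (phi N) a) \<longleftrightarrow>
           (\<forall>K L. hyperideal add mult zero K \<longrightarrow> hyperideal add mult zero L \<longrightarrow>
              hideal_prod add mult zero K L \<subseteq> N \<longrightarrow> \<not> hideal_prod add mult zero K L \<subseteq> phi N \<longrightarrow>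
              K \<subseteq> N \<or> L \<subseteq> hradical mult one N))"
proof -
  interpret kh add mult zero one by unfold_locales (rule assms(1))
  have "ideal (phi N) \<or> phi N = {}" using assms(2,4) by blast
  from main[of N phi, OF assms(2,3) this assms(5)] show ?thesis by blast
qed

end
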